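(* Let $p$ be an odd prime and $\zeta=e^{2\pi\mathbf i/(p-1)}$. Then $$\prod_{1\le i<j\le \frac{p-1}{2}}(\zeta^{2j}-\zeta^{2i})=e^{\frac{(p-3)(3p+1)}{16}\pi\mathbf i}\cdot\Big(\frac{p-1}{2}\Big)^{\frac{p-1}{4}},$$ where $\big(\frac{p-1}{2}\big)^{\frac{p-1}{4}}$ denotes the positive real power.
   Context: $\mathbf i=\sqrt{-1}$. *)

theory Defs
  imports "HOL-Analysis.Analysis"
begin

end

theory Submission
  imports Defs "HOL-Computational_Algebra.Fundamental_Theorem_Algebra"
begin

lemma roots_deriv:
  fixes n :: nat and w :: complex
  assumes n: "n \<ge> 1" and w: "w ^ n = 1"
  shows "(\<Prod>z\<in>{z::complex. z^n = 1} - {w}. (w - z)) = of_nat n * w^(n-1)"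
proof -
  define P where "P = ([:-1:] + monom 1 n :: complex poly)"
  have polyP: "poly P x = x^n - 1" for x by (simp add: P_def poly_monom)
  have R: "{z. poly P z = 0} = {z. z^n = 1}" by (simp add: polyP)
  have finR: "finite {z::complex. z^n = 1}" using n by (intro finite_roots_unity) auto
  have lc: "lead_coeff P = 1"
    unfolding P_def using n by (subst lead_coeff_add_le) (auto simp: degree_monom_eq)
  have dP: "pderiv P = monom (of_nat n) (n - 1)"
    by (simp add: P_def pderiv_add pderiv_monom pderiv_pCons)
  have "rsquarefree P"
    unfolding rsquarefree_roots
  proof (intro allI notI)
    fix a assume a: "poly P a = 0 \<and> poly (pderiv P) a = 0"
    hence "a ^ n = 1" using polyP by simp
    hence "a \<noteq> 0" using n by (auto simp: power_0_left)
    moreover have "of_nat n * a ^ (n-1) = 0" using a by (simp add: dP poly_monom)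
    ultimately show False using n by simp
  qed
  from complex_poly_decompose_rsquarefree[OF this]
  have Pdec: "P = (\<Prod>z\<in>{z::complex. z^n = 1}. [:-z, 1:])" using lc R by simp
  have "poly (pderiv P) w = (\<Sum>a\<in>{z::complex. z^n = 1}. \<Prod>z\<in>{z::complex. z^n = 1} - {a}. (w - z))"
    by (subst Pdec) (simp add: pderiv_prod poly_sum poly_prod pderiv_pCons)
  also have "\<dots> = (\<Prod>z\<in>{z::complex. z^n = 1} - {w}. (w - z))"
  proof -
    have wR: "w \<in> {z::complex. z^n = 1}" using w by simp
    have "(\<Sum>a\<in>{z::complex. z^n = 1} - {w}. \<Prod>z\<in>{z::complex. z^n = 1} - {a}. (w - z)) = 0"
    proof (rule sum.neutral, intro ballI)
      fix a assume "a \<in> {z::complex. z^n = 1} - {w}"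
      hence "w \<in> {z::complex. z^n = 1} - {a}" using w by auto
      thus "(\<Prod>z\<in>{z::complex. z^n = 1} - {a}. (w - z)) = 0"
        using finR by (intro prod_zero) auto
    qed
    thus ?thesis by (subst sum.remove[OF finR wR]) simp
  qed
  finally show ?thesis by (simp add: dP poly_monom)
qed

definition ru :: "nat \<Rightarrow> nat \<Rightarrow> complex" where
  "ru n k = cis (2 * pi * real k / real n)"

lemma ru_bij:
  assumes n: "n \<ge> 1"
  shows "bij_betw (ru n) {1..n} {z::complex. z ^ n = 1}"
proof -
  define h where "h k = (if k = n then 0 else k)" for k :: nat
  have hb: "bij_betw h {1..n} {..<n}"
    unfolding bij_betw_def inj_on_def h_def
  proof (intro conjI ballI impI)
    show "(\<lambda>k. if k = n then 0 else k) ` {1..n} = {..<n}"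
    proof
      show "(\<lambda>k. if k = n then 0 else k) ` {1..n} \<subseteq> {..<n}" using n by auto
      show "{..<n} \<subseteq> (\<lambda>k. if k = n then 0 else k) ` {1..n}"
      proof
        fix x assume x: "x \<in> {..<n}"
        show "x \<in> (\<lambda>k. if k = n then 0 else k) ` {1..n}"
        proof (cases "x = 0")
          case True thus ?thesis using n by (intro image_eqI[of _ _ n]) auto
        next
          case False thus ?thesis using x by (intro image_eqI[of _ _ x]) auto
        qed
      qed
    qed
  qed (auto split: if_splits)
  have "bij_betw ((\<lambda>k. cis (2 * pi * real k / real n)) \<circ> h) {1..n} {z::complex. z ^ n = 1}"
  proof -
    have br: "bij_betw (\<lambda>k. cis (2 * pi * real k / real n)) {..<n} {z::complex. z ^ n = 1}"
      using Complex.bij_betw_roots_unity[of n] n by auto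
    show ?thesis by (rule bij_betw_trans[OF hb br])
  qed
  moreover have "((\<lambda>k. cis (2 * pi * real k / real n)) \<circ> h) k = ru n k" if "k \<in> {1..n}" for k
    using n by (auto simp: h_def ru_def)
  ultimately show ?thesis using bij_betw_cong by (metis (no_types, lifting))
qed

lemma offdiag_prod:
  assumes n: "n \<ge> 1"
  shows "(\<Prod>i\<in>{1..n}. \<Prod>j\<in>{1..n} - {i}. norm (ru n i - ru n j)) = real n ^ n"
proof -
  have b: "bij_betw (ru n) {1..n} {z::complex. z ^ n = 1}" by (rule ru_bij[OF n])
  have inner: "(\<Prod>j\<in>{1..n} - {i}. norm (ru n i - ru n j)) = real n" if i: "i \<in> {1..n}" for i
  proof -
    have inj: "inj_on (ru n) {1..n}" using b by (auto simp: bij_betw_def)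
    have im: "ru n ` ({1..n} - {i}) = {z::complex. z ^ n = 1} - {ru n i}"
      using inj_on_image_set_diff[OF inj, of "{1..n}" "{i}"] i b by (auto simp: bij_betw_def)
    have "(\<Prod>j\<in>{1..n} - {i}. norm (ru n i - ru n j)) = (\<Prod>z\<in>ru n ` ({1..n} - {i}). norm (ru n i - z))"
      by (subst prod.reindex) (auto intro: inj_on_subset[OF inj])
    also have "\<dots> = norm (\<Prod>z\<in>{z::complex. z ^ n = 1} - {ru n i}. (ru n i - z))"
      by (simp only: im prod_norm)
    also have "ru n i ^ n = 1" using b i by (auto simp: bij_betw_def)
    hence "(\<Prod>z\<in>{z::complex. z ^ n = 1} - {ru n i}. (ru n i - z)) = of_nat n * ru n i ^ (n-1)"
      using roots_deriv[OF n] by blast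
    also have "norm (of_nat n * ru n i ^ (n-1) :: complex) = real n"
      by (simp add: norm_mult norm_power ru_def)
    finally show ?thesis .
  qed
  have "(\<Prod>i\<in>{1..n}. \<Prod>j\<in>{1..n} - {i}. norm (ru n i - ru n j)) = (\<Prod>i\<in>{1..n}. real n)"
    by (rule prod.cong) (auto simp only: inner)
  thus ?thesis by simp
qed

lemma pairs_sum:
  fixes g :: "nat \<Rightarrow> nat \<Rightarrow> 'a::comm_monoid_add" and n :: nat
  shows "(\<Sum>(i, j) \<in> {(i, j). 1 \<le> i \<and> i < j \<and> j \<le> n}. g i j) = (\<Sum>j\<in>{1..n}. \<Sum>i\<in>{1..<j}. g i j)"
proof -
  have eq: "{(i, j). 1 \<le> i \<and> i < j \<and> j \<le> n} = prod.swap ` (SIGMA j:{1..n}. {1..<j})"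
    by (auto simp: image_iff)
  show ?thesis
    by (subst eq, subst sum.reindex) (auto simp: sum.Sigma case_prod_unfold)
qed

lemma arith_aux:
  fixes A B n :: nat
  assumes "2 * A = (n - 1) * n * (n + 1)" "2 * B = 3 * n * Suc n"
  shows "2 * (A + B) = (Suc n - 1) * Suc n * (Suc n + 1)"
proof (cases n)
  case 0 thus ?thesis using assms by simp
next
  case (Suc m)
  have "2 * (A + B) = 2 * A + 2 * B" by simp
  thus ?thesis using assms Suc by (simp add: algebra_simps)
qed

lemma sumS: "2 * (\<Sum>j\<in>{1..(n::nat)}. \<Sum>i\<in>{1..<j}. (i + j)) = (n - 1) * n * (n + 1)"
proof (induction n)
  case 0 then show ?case by simp
next
  case (Suc n)
  have g: "2 * (\<Sum>i\<in>{1..<Suc n}. (i::nat)) = n * Suc n" by (induction n) auto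
  have "2 * (\<Sum>i\<in>{1..<Suc n}. (i + Suc n)) = 3 * n * Suc n"
  proof -
    have "(\<Sum>i\<in>{1..<Suc n}. (i + Suc n)) = (\<Sum>i\<in>{1..<Suc n}. i) + n * Suc n"
      by (subst sum.distrib) simp
    thus ?thesis using g by simp
  qed
  moreover have "(\<Sum>j\<in>{1..Suc n}. \<Sum>i\<in>{1..<j}. (i + j)) = (\<Sum>j\<in>{1..n}. \<Sum>i\<in>{1..<j}. (i + j)) + (\<Sum>i\<in>{1..<Suc n}. (i + Suc n))"
    by (simp only: sum.cl_ivl_Suc) simp
  ultimately show ?case using Suc.IH arith_aux by (metis Suc_eq_plus1 add_2_eq_Suc' diff_Suc_1)
qed

lemma sumM: "2 * (\<Sum>j\<in>{1..(n::nat)}. \<Sum>i\<in>{1..<j}. (1::nat)) = (n - 1) * n"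
proof (induction n)
  case 0 then show ?case by simp
next
  case (Suc n) then show ?case by (cases n) (simp_all add: algebra_simps)
qed

lemma cis_sum: "finite A \<Longrightarrow> (\<Prod>x\<in>A. cis (f x)) = cis (\<Sum>x\<in>A. f x)"
  by (induction rule: finite_induct) (auto simp: cis_mult)

lemma cis_diff_neg: "cis t - cis (-t) = \<i> * complex_of_real (2 * sin t)"
  by (simp add: complex_eq_iff cis.ctr)


lemma sq_pairs:
  "(\<Prod>(i, j) \<in> {(i, j). 1 \<le> i \<and> i < j \<and> j \<le> n}. norm (ru n j - ru n i)) ^ 2
   = (\<Prod>i\<in>{1..n}. \<Prod>j\<in>{1..n} - {i}. norm (ru n i - ru n j))"
proof -
  define P where "P = {(i, j). 1 \<le> i \<and> i < j \<and> j \<le> n}"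
  define f where "f = (\<lambda>(i, j). norm (ru n i - ru n j))"
  have finP: "finite P"
    by (rule finite_subset[of _ "{1..n} \<times> {1..n}"]) (auto simp: P_def)
  have sig: "Sigma {1..n} (\<lambda>i. {1..n} - {i}) = P \<union> prod.swap ` P"
    by (auto simp: P_def image_iff)
  have disj: "P \<inter> prod.swap ` P = {}" by (auto simp: P_def)
  have "(\<Prod>i\<in>{1..n}. \<Prod>j\<in>{1..n} - {i}. norm (ru n i - ru n j)) = prod f (Sigma {1..n} (\<lambda>i. {1..n} - {i}))"
    by (subst prod.Sigma) (auto simp: f_def)
  also have "\<dots> = prod f P * prod f (prod.swap ` P)"
    using finP disj by (simp only: sig) (rule prod.union_disjoint, auto)
  also have "prod f (prod.swap ` P) = prod (f \<circ> prod.swap) P"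
    by (rule prod.reindex) simp
  also have "prod (f \<circ> prod.swap) P = (\<Prod>(i, j) \<in> P. norm (ru n j - ru n i))"
    by (rule prod.cong) (auto simp: f_def)
  also have "prod f P = (\<Prod>(i, j) \<in> P. norm (ru n j - ru n i))"
    by (rule prod.cong) (auto simp: f_def norm_minus_commute)
  finally show ?thesis by (simp add: P_def power2_eq_square)
qed

theorem mainTheorem7:
  fixes p :: nat
  assumes "prime p" and "odd p"
  defines "\<zeta> \<equiv> exp (2 * pi * \<i> / of_nat (p - 1))"
  shows "(\<Prod>(i, j) \<in> {(i, j). 1 \<le> i \<and> i < j \<and> j \<le> (p - 1) div 2}.
            \<zeta> ^ (2 * j) - \<zeta> ^ (2 * i))
         = exp (complex_of_real (real ((p - 3) * (3 * p + 1)) / 16 * pi) * \<i>)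
           * complex_of_real ((real (p - 1) / 2) powr (real (p - 1) / 4))"
proof -
  have "p \<ge> 2" using assms(1) prime_ge_2_nat by blast
  moreover have "p \<noteq> 2" using assms(2) by auto
  ultimately have p3: "p \<ge> 3" by simp
  define n where "n = (p - 1) div 2"
  have hp: "p = 2 * n + 1" using assms(2) p3 unfolding n_def by presburger
  have n1: "n \<ge> 1" using p3 hp by simp
  have npos: "real n > 0" using n1 by simp
  define P where "P = {(i, j). 1 \<le> i \<and> i < j \<and> j \<le> n}"
  have finP: "finite P"
    by (rule finite_subset[of _ "{1..n} \<times> {1..n}"]) (auto simp: P_def)
  have zc: "\<zeta> = cis (pi / real n)"
  proof -
    have "of_nat (p - 1) = (2 * of_nat n :: complex)" using hp by simp
    thus ?thesis unfolding \<zeta>_def cis_conv_exp using npos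
      by (simp add: field_simps)
  qed
  have zeta: "\<zeta> ^ (2 * k) = ru n k" for k
    unfolding zc Complex.DeMoivre ru_def by (simp add: field_simps)
  define s where "s = (\<lambda>(i::nat, j::nat). pi * (real i + real j) / real n)"
  define r where "r = (\<lambda>(i::nat, j::nat). 2 * sin (pi * (real j - real i) / real n))"
  have trm: "ru n j - ru n i = cis (s (i, j)) * (\<i> * complex_of_real (r (i, j)))" for i j
  proof -
    have "cis (s (i, j)) * (\<i> * complex_of_real (r (i, j)))
        = cis (s (i, j)) * (cis (pi * (real j - real i) / real n) - cis (- (pi * (real j - real i) / real n)))"
      unfolding cis_diff_neg r_def by simp
    also have "\<dots> = cis (s (i, j) + pi * (real j - real i) / real n) - cis (s (i, j) - pi * (real j - real i) / real n)"
      by (simp add: algebra_simps cis_mult)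
    also have "s (i, j) + pi * (real j - real i) / real n = 2 * pi * real j / real n"
      unfolding s_def using npos by (simp add: field_simps)
    also have "s (i, j) - pi * (real j - real i) / real n = 2 * pi * real i / real n"
      unfolding s_def using npos by (simp add: field_simps)
    finally show ?thesis by (simp add: ru_def)
  qed
  define M where "M = card P"
  define R where "R = (\<Prod>x\<in>P. r x)"
  have LHS: "(\<Prod>(i, j) \<in> P. \<zeta> ^ (2 * j) - \<zeta> ^ (2 * i))
      = cis (sum s P) * \<i> ^ M * complex_of_real R"
  proof -
    have "(\<Prod>(i, j) \<in> P. \<zeta> ^ (2 * j) - \<zeta> ^ (2 * i)) = (\<Prod>x \<in> P. cis (s x) * (\<i> * complex_of_real (r x)))"
      by (rule prod.cong) (auto simp: zeta trm)
    also have "\<dots> = (\<Prod>x \<in> P. cis (s x)) * \<i> ^ M * complex_of_real R"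
      by (simp add: prod.distrib M_def R_def mult.assoc)
    also have "(\<Prod>x \<in> P. cis (s x)) = cis (sum s P)" by (rule cis_sum[OF finP])
    finally show ?thesis .
  qed
  have Rnn: "R \<ge> 0"
    unfolding R_def
  proof (rule prod_nonneg, clarify)
    fix i j assume ij: "(i, j) \<in> P"
    hence "real j \<le> real i + real n" by (auto simp: P_def)
    hence "pi * real j \<le> pi * real i + pi * real n"
      by (metis distrib_left mult_left_mono pi_ge_zero)
    hence "0 \<le> pi * (real j - real i) / real n" "pi * (real j - real i) / real n \<le> pi"
      using npos ij by (auto simp: P_def field_simps)
    thus "0 \<le> r (i, j)" unfolding r_def by (simp add: sin_ge_zero)
  qed
  have normL: "norm (\<Prod>(i, j) \<in> P. \<zeta> ^ (2 * j) - \<zeta> ^ (2 * i)) = R"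
    unfolding LHS using Rnn by (simp add: norm_mult norm_power)
  have "norm (\<Prod>(i, j) \<in> P. \<zeta> ^ (2 * j) - \<zeta> ^ (2 * i)) = (\<Prod>(i, j) \<in> P. norm (ru n j - ru n i))"
    by (simp add: prod_norm[symmetric] case_prod_unfold zeta)
  hence "R ^ 2 = real n ^ n"
    using normL sq_pairs[of n] offdiag_prod[OF n1] by (simp add: P_def)
  moreover have "(real n powr (real n / 2)) ^ 2 = real n ^ n"
    using npos by (simp add: powr_power powr_realpow)
  ultimately have Rv: "R = real n powr (real n / 2)"
    using Rnn by (metis power2_eq_imp_eq powr_ge_zero)
  have SS: "2 * real (\<Sum>(i, j) \<in> P. i + j) = (real n - 1) * real n * (real n + 1)"
  proof -
    have "2 * (\<Sum>(i, j) \<in> P. i + j) = (n - 1) * n * (n + 1)"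
      unfolding P_def pairs_sum by (rule sumS)
    hence "real (2 * (\<Sum>(i, j) \<in> P. i + j)) = real ((n - 1) * n * (n + 1))" by simp
    thus ?thesis using n1 by (simp only: of_nat_mult of_nat_diff of_nat_add) simp
  qed
  have MM: "2 * real M = (real n - 1) * real n"
  proof -
    have "M = (\<Sum>(i, j) \<in> P. (1::nat))" unfolding M_def by simp
    also have "\<dots> = (\<Sum>j\<in>{1..n}. \<Sum>i\<in>{1..<j}. (1::nat))" unfolding P_def by (rule pairs_sum)
    finally have "2 * M = (n - 1) * n" using sumM[of n] by simp
    hence "real (2 * M) = real ((n - 1) * n)" by simp
    thus ?thesis using n1 by (simp only: of_nat_mult of_nat_diff) simp
  qed
  have sP: "sum s P = pi / real n * real (\<Sum>(i, j) \<in> P. i + j)"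
    unfolding s_def by (simp add: sum_distrib_left case_prod_unfold)
  have iM: "\<i> ^ M = cis (real M * (pi / 2))" using Complex.DeMoivre[of "pi/2" M] by simp
  have tt: "real ((p - 3) * (3 * p + 1)) = (2 * real n - 2) * (6 * real n + 4)"
  proof -
    have "p - 3 = 2 * n - 2" "3 * p + 1 = 6 * n + 4" using hp by auto
    thus ?thesis using n1 by (simp add: of_nat_diff)
  qed
  have ang: "sum s P + real M * (pi / 2) = real ((p - 3) * (3 * p + 1)) / 16 * pi"
  proof -
    obtain X where X: "real (\<Sum>(i, j) \<in> P. i + j) = X" by blast
    have X2: "X = (real n - 1) * real n * (real n + 1) / 2" using SS X by simp
    have e1: "sum s P = pi * ((real n - 1) * (real n + 1)) / 2"
      unfolding sP X X2 using npos by (simp add: field_simps)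
    have e2: "real M = (real n - 1) * real n / 2" using MM by simp
    show ?thesis unfolding tt e1 e2 by (simp add: field_simps)
  qed
  have "(\<Prod>(i, j) \<in> P. \<zeta> ^ (2 * j) - \<zeta> ^ (2 * i))
      = cis (real ((p - 3) * (3 * p + 1)) / 16 * pi) * complex_of_real (real n powr (real n / 2))"
    unfolding LHS iM Rv cis_mult ang by simp
  moreover have "real (p - 1) / 2 = real n" "real (p - 1) / 4 = real n / 2" using hp by auto
  ultimately show ?thesis
    by (simp add: P_def n_def cis_conv_exp mult.commute)
qed
end
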